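(* Let $P$, $T_\Sigma$, the lattice points $b_1,\dots,b_{p+3}$ and the coefficients $a_i(q)$ of the mirror curve be as described in the context. Suppose $b_{i_1}$ and $b_{i_2}$ are joined by an edge (1-cell) of $T_\Sigma$ and $b_{i_3}$ is a lattice point of $P$ with $2b_{i_2}=b_{i_1}+b_{i_3}$. Then $\dfrac{a_{i_1}(q)\,a_{i_3}(q)}{a_{i_2}(q)^2}$ is a non-constant monomial of $q$.
   Context: Let $P\subset\mathbb{R}^2$ be a convex lattice polygon with a unimodular triangulation $T_\Sigma$ (every triangle of $T_\Sigma$ has lattice vertices and area $1/2$, and the vertex set of $T_\Sigma$ is $P\cap\mathbb{Z}^2$); this encodes a smooth toric Calabi–Yau 3-fold whose fan has rays generated by $(m,n,1)$, $(m,n)\in P\cap\mathbb{Z}^2$, and 3-cones over the triangles of $T_\Sigma$. Write $P\cap\mathbb{Z}^2=\{b_1,\dots,b_{p+3}\}$, $b_i=(m_i,n_i)$, with $b_1=(1,0)$, $b_2=(0,1)$, $b_3=(0,0)$, where $\sigma_1=\{b_1,b_2,b_3\}$ is a triangle of $T_\Sigma$. Let $L=\ker(\mathbb{Z}^{p+3}\to\mathbb{Z}^3,\ e_i\mapsto(m_i,n_i,1))$ and let $D_i\in L^\vee=\mathrm{Hom}(L,\mathbb{Z})$ be the restriction of the $i$-th coordinate functional. For a triangle $\sigma$ of $T_\Sigma$ let $I'_\sigma$ be the set of indices of its vertices; then $\{D_j:j\notin I'_\sigma\}$ is a basis of $L^\vee\otimes\mathbb{Q}$. Fix $H_1,\dots,H_p\in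 L^\vee\otimes\mathbb{Q}$ (nef classes) such that for every triangle $\sigma$, $H_k=\sum_{j\notin I'_\sigma}s^\sigma_{k,j}D_j$ with all $s^\sigma_{k,j}\in\mathbb{Z}_{\ge0}$ and the $p\times p$ matrix $(s^\sigma_{k,j})$ nondegenerate. For $q=(q_1,\dots,q_p)\in(\mathbb{C}^* )^p$ put $a_i(q)=1$ for $i=1,2,3$ and $a_i(q)=\prod_{k=1}^p q_k^{s^{\sigma_1}_{k,i}}$ for $i\ge4$. The mirror curve is the zero set in $(\mathbb{C}^* )^2$ of $H(X,Y,q)=\sum_{i=1}^{p+3}a_i(q)X^{m_i}Y^{n_i}=1+X+Y+\sum_{i\ge4}a_i(q)X^{m_i}Y^{n_i}$. A non-constant monomial of $q$ means $\prod_k q_k^{e_k}$ with $e_k\in\mathbb{Z}_{\ge0}$ not all zero. *)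

theory Defs
  imports "HOL-Analysis.Analysis" "Jordan_Normal_Form.Determinant"
begin

definition pt :: "int \<times> int \<Rightarrow> real \<times> real" where
  "pt z = (of_int (fst z), of_int (snd z))"

definition convex_lattice_polygon :: "(real \<times> real) set \<Rightarrow> bool" where
  "convex_lattice_polygon P \<longleftrightarrow>
     (\<exists>S. finite S \<and> P = convex hull (pt ` S)) \<and> interior P \<noteq> {}"

text \<open>The lattice points of P are enumerated as b 1, ..., b N (N = p+3).
  A triangle of the triangulation is given by the set of indices of its vertices.\<close>
definition tri_hull :: "(nat \<Rightarrow> int \<times> int) \<Rightarrow> nat set \<Rightarrow> (real \<times> real) set" where
  "tri_hull b \<sigma> = convex hull ((pt \<circ> b) ` \<sigma>)"

definition unimodular_triangle :: "(nat \<Rightarrow> int \<times> int) \<Rightarrow> nat set \<Rightarrow> bool" where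
  "unimodular_triangle b \<sigma> \<longleftrightarrow> card \<sigma> = 3 \<and>
     (\<forall>i j k. \<sigma> = {i, j, k} \<longrightarrow>
        \<bar>(fst (b j) - fst (b i)) * (snd (b k) - snd (b i))
          - (fst (b k) - fst (b i)) * (snd (b j) - snd (b i))\<bar> = 1)"

definition unimodular_triangulation ::
  "(real \<times> real) set \<Rightarrow> nat \<Rightarrow> (nat \<Rightarrow> int \<times> int) \<Rightarrow> nat set set \<Rightarrow> bool" where
  "unimodular_triangulation P N b T \<longleftrightarrow>
     finite T \<and>
     (\<forall>\<sigma>\<in>T. \<sigma> \<subseteq> {1..N} \<and> unimodular_triangle b \<sigma>) \<and>
     \<Union>T = {1..N} \<and>
     \<Union>(tri_hull b ` T) = P \<and>
     (\<forall>\<sigma>\<in>T. \<forall>\<tau>\<in>T. tri_hull b \<sigma> \<inter> tri_hull b \<tau> = tri_hull b (\<sigma> \<inter> \<tau>))"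

text \<open>The lattice L = ker(Z^N \<rightarrow> Z^3, e_i \<mapsto> (m_i, n_i, 1)), with vectors represented
  as functions nat \<Rightarrow> int supported on {1..N}. D_j is l \<mapsto> l j.\<close>
definition charge_lattice :: "nat \<Rightarrow> (nat \<Rightarrow> int \<times> int) \<Rightarrow> (nat \<Rightarrow> int) set" where
  "charge_lattice N b = {l. (\<forall>j. j \<notin> {1..N} \<longrightarrow> l j = 0) \<and>
      (\<Sum>j\<in>{1..N}. l j * fst (b j)) = 0 \<and>
      (\<Sum>j\<in>{1..N}. l j * snd (b j)) = 0 \<and>
      (\<Sum>j\<in>{1..N}. l j) = 0}"

definition s_matrix :: "nat \<Rightarrow> nat \<Rightarrow> (nat \<Rightarrow> nat \<Rightarrow> nat) \<Rightarrow> nat set \<Rightarrow> int mat" where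
  "s_matrix p N s\<sigma> \<sigma> =
     mat p p (\<lambda>(k, j). int (s\<sigma> (k + 1) (sorted_list_of_set ({1..N} - \<sigma>) ! j)))"

definition mirror_coeff ::
  "nat \<Rightarrow> (nat \<Rightarrow> nat \<Rightarrow> nat) \<Rightarrow> nat \<Rightarrow> (nat \<Rightarrow> complex) \<Rightarrow> complex" where
  "mirror_coeff p s1 i q = (if i \<in> {1, 2, 3} then 1 else (\<Prod>k\<in>{1..p}. q k ^ s1 k i))"

end

theory Submission
  imports Defs
begin

lemma det_zero_col:
  fixes A :: "'a::comm_ring_1 mat"
  assumes A: "A \<in> carrier_mat n n" and j: "j < n" and z: "\<And>i. i < n \<Longrightarrow> A $$ (i, j) = 0"
  shows "det A = 0"
proof -
  have "det (transpose_mat A) = 0"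
  proof -
    have "(\<Prod>i = 0 ..< n. transpose_mat A $$ (i, p i)) = 0" if p: "p permutes {0..<n}" for p
    proof (rule prod_zero)
      show "\<exists>i\<in>{0..<n}. transpose_mat A $$ (i, p i) = 0"
        using j p A z[of "p j"] by (intro bexI[of _ j]) (auto simp: permutes_in_image)
    qed simp
    thus ?thesis using A unfolding det_def by simp
  qed
  thus ?thesis using det_transpose[OF A] by simp
qed

lemma sum_delta3:
  fixes f :: "nat \<Rightarrow> 'a::comm_ring_1"
  assumes "finite A"
  shows "(\<Sum>j\<in>A. f j * ((if j = i1 then 1 else 0) + (if j = i3 then 1 else 0) - 2 * (if j = i2 then 1 else 0)))
    = (if i1 \<in> A then f i1 else 0) + (if i3 \<in> A then f i3 else 0) - 2 * (if i2 \<in> A then f i2 else 0)"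
proof -
  have "(\<Sum>j\<in>A. f j * ((if j = i1 then 1 else 0) + (if j = i3 then 1 else 0) - 2 * (if j = i2 then 1 else 0)))
    = (\<Sum>j\<in>A. (if j = i1 then f j else 0) + (if j = i3 then f j else 0) - 2 * (if j = i2 then f j else 0))"
    by (intro sum.cong) (auto simp: algebra_simps)
  also have "\<dots> = (\<Sum>j\<in>A. (if j = i1 then f j else 0)) + (\<Sum>j\<in>A. (if j = i3 then f j else 0)) - 2 * (\<Sum>j\<in>A. (if j = i2 then f j else 0))"
    by (simp add: sum.distrib sum_subtractf sum_distrib_left)
  also have "\<dots> = (if i1 \<in> A then f i1 else 0) + (if i3 \<in> A then f i3 else 0) - 2 * (if i2 \<in> A then f i2 else 0)"
    using assms by (simp add: sum.delta')
  finally show ?thesis .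
qed

lemma sum_delta3R:
  fixes f :: "nat \<Rightarrow> 'a::comm_ring_1"
  assumes "finite A"
  shows "(\<Sum>j\<in>A. ((if j = i1 then 1 else 0) + (if j = i3 then 1 else 0) - 2 * (if j = i2 then 1 else 0)) * f j)
    = (if i1 \<in> A then f i1 else 0) + (if i3 \<in> A then f i3 else 0) - 2 * (if i2 \<in> A then f i2 else 0)"
  using sum_delta3[OF assms, of f i1 i3 i2] by (simp add: mult.commute)

theorem proposition2p5p3:
  fixes P :: "(real \<times> real) set" and p :: nat and b :: "nat \<Rightarrow> int \<times> int"
    and T :: "nat set set"
    and H :: "nat \<Rightarrow> (nat \<Rightarrow> int) \<Rightarrow> rat"
    and s :: "nat set \<Rightarrow> nat \<Rightarrow> nat \<Rightarrow> nat"
    and i1 i2 i3 :: nat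
  assumes P: "convex_lattice_polygon P"
    and b_enum: "bij_betw b {1..p+3} {z. pt z \<in> P}"
    and b123: "b 1 = (1, 0)" "b 2 = (0, 1)" "b 3 = (0, 0)"
    and T: "unimodular_triangulation P (p+3) b T"
    and sigma1: "{1, 2, 3} \<in> T"
    and H: "\<forall>\<sigma>\<in>T. \<forall>k\<in>{1..p}. \<forall>l\<in>charge_lattice (p+3) b.
              H k l = (\<Sum>j\<in>{1..p+3} - \<sigma>. of_nat (s \<sigma> k j) * of_int (l j))"
    and nondeg: "\<forall>\<sigma>\<in>T. det (s_matrix p (p+3) (s \<sigma>) \<sigma>) \<noteq> 0"
    and edge: "i1 \<noteq> i2" "\<exists>\<sigma>\<in>T. {i1, i2} \<subseteq> \<sigma>"
    and i3: "i3 \<in> {1..p+3}"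
    and collinear: "2 * fst (b i2) = fst (b i1) + fst (b i3)"
                   "2 * snd (b i2) = snd (b i1) + snd (b i3)"
  shows "\<exists>e :: nat \<Rightarrow> nat. (\<exists>k\<in>{1..p}. e k \<noteq> 0) \<and>
           (\<forall>q :: nat \<Rightarrow> complex. (\<forall>k\<in>{1..p}. q k \<noteq> 0) \<longrightarrow>
              mirror_coeff p (s {1, 2, 3}) i1 q * mirror_coeff p (s {1, 2, 3}) i3 q
                / mirror_coeff p (s {1, 2, 3}) i2 q ^ 2
              = (\<Prod>k\<in>{1..p}. q k ^ e k))"
proof -
  define N where "N = p + 3"
  obtain \<sigma> where \<sigma>T: "\<sigma> \<in> T" and sub: "{i1, i2} \<subseteq> \<sigma>" using edge by blast
  have \<sigma>N: "\<sigma> \<subseteq> {1..N}" and uni: "unimodular_triangle b \<sigma>"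
    using T \<sigma>T unfolding unimodular_triangulation_def N_def by auto
  have inj: "inj_on b {1..N}" using b_enum bij_betw_imp_inj_on unfolding N_def by blast
  have i12N: "i1 \<in> {1..N}" "i2 \<in> {1..N}" using sub \<sigma>N by auto
  have i3N: "i3 \<in> {1..N}" using i3 unfolding N_def .
  have ne31: "i3 \<noteq> i1"
  proof
    assume "i3 = i1"
    then have "b i2 = b i1" using collinear by (simp add: prod_eq_iff)
    thus False using inj_onD[OF inj _ i12N(2) i12N(1)] edge(1) by auto
  qed
  have ne32: "i3 \<noteq> i2"
  proof
    assume "i3 = i2"
    then have "b i2 = b i1" using collinear by (simp add: prod_eq_iff)
    thus False using inj_onD[OF inj _ i12N(2) i12N(1)] edge(1) by auto
  qed
  have i3n\<sigma>: "i3 \<notin> \<sigma>"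
  proof
    assume "i3 \<in> \<sigma>"
    have c3: "card \<sigma> = 3" using uni unfolding unimodular_triangle_def by simp
    have "{i1, i2, i3} \<subseteq> \<sigma>" using sub \<open>i3 \<in> \<sigma>\<close> by auto
    moreover have "card {i1, i2, i3} = 3" using edge(1) ne31 ne32 by auto
    moreover have "finite \<sigma>" using c3 card.infinite by fastforce
    ultimately have "\<sigma> = {i1, i2, i3}" using c3 by (metis card_subset_eq)
    then have "\<bar>(fst (b i2) - fst (b i1)) * (snd (b i3) - snd (b i1))
          - (fst (b i3) - fst (b i1)) * (snd (b i2) - snd (b i1))\<bar> = 1"
      using uni unfolding unimodular_triangle_def by blast
    moreover have "fst (b i3) - fst (b i1) = 2 * (fst (b i2) - fst (b i1))"
      "snd (b i3) - snd (b i1) = 2 * (snd (b i2) - snd (b i1))" using collinear by (simp_all add: algebra_simps)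
    ultimately show False by (simp add: algebra_simps)
  qed
  define l :: "nat \<Rightarrow> int" where "l j = (if j = i1 then 1 else 0) + (if j = i3 then 1 else 0) - 2 * (if j = i2 then 1 else 0)" for j
  have lL: "l \<in> charge_lattice (p+3) b"
  proof -
    have fin: "finite {1..N}" by simp
    have e1: "(\<Sum>j\<in>{1..N}. l j * fst (b j)) = 0"
      unfolding l_def sum_delta3R[OF fin] using i12N i3N collinear by simp
    have e2: "(\<Sum>j\<in>{1..N}. l j * snd (b j)) = 0"
      unfolding l_def sum_delta3R[OF fin] using i12N i3N collinear by simp
    have e3: "(\<Sum>j\<in>{1..N}. l j) = 0"
      using sum_delta3R[OF fin, of i1 i3 i2 "\<lambda>_. 1::int"] unfolding l_def using i12N i3N by simp
    have e4: "\<forall>j. j \<notin> {1..N} \<longrightarrow> l j = 0" unfolding l_def using i12N i3N by auto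
    show ?thesis unfolding charge_lattice_def N_def[symmetric] using e1 e2 e3 e4 by blast
  qed
  define t where "t k i = (if i \<in> {1,2,3} then 0 else s {1,2,3} k i)" for k i
  define e where "e k = s \<sigma> k i3" for k
  have key: "t k i1 + t k i3 = 2 * t k i2 + e k" if k: "k \<in> {1..p}" for k
  proof -
    have fin: "finite ({1..N} - \<sigma>)" "finite ({1..N} - {1,2,3})" by auto
    have "H k l = (\<Sum>j\<in>{1..N} - \<sigma>. of_nat (s \<sigma> k j) * of_int (l j))"
      using H \<sigma>T k lL unfolding N_def by blast
    also have "\<dots> = (\<Sum>j\<in>{1..N} - \<sigma>. of_nat (s \<sigma> k j) * ((if j = i1 then 1 else 0) + (if j = i3 then 1 else 0) - 2 * (if j = i2 then 1 else 0)))"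
      by (intro sum.cong) (auto simp: l_def)
    also have "\<dots> = of_nat (e k)"
      unfolding sum_delta3[OF fin(1)] using sub i3n\<sigma> i3N by (simp add: e_def)
    finally have 1: "H k l = of_nat (e k)" .
    have "H k l = (\<Sum>j\<in>{1..N} - {1,2,3}. of_nat (s {1,2,3} k j) * of_int (l j))"
      using H sigma1 k lL unfolding N_def by blast
    also have "\<dots> = (\<Sum>j\<in>{1..N} - {1,2,3}. of_nat (s {1,2,3} k j) * ((if j = i1 then 1 else 0) + (if j = i3 then 1 else 0) - 2 * (if j = i2 then 1 else 0)))"
      by (intro sum.cong) (auto simp: l_def)
    also have "\<dots> = of_nat (t k i1) + of_nat (t k i3) - 2 * of_nat (t k i2)"
      unfolding sum_delta3[OF fin(2)] using i12N i3N by (simp add: t_def)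
    finally have "(of_nat (t k i1) + of_nat (t k i3) :: rat) = of_nat (2 * t k i2 + e k)" using 1 by simp
    then show ?thesis by (metis of_nat_add of_nat_eq_iff)
  qed
  have enz: "\<exists>k\<in>{1..p}. e k \<noteq> 0"
  proof (rule ccontr)
    assume "\<not> ?thesis"
    then have z: "\<And>k. k \<in> {1..p} \<Longrightarrow> s \<sigma> k i3 = 0" unfolding e_def by blast
    define xs where "xs = sorted_list_of_set ({1..N} - \<sigma>)"
    have c3: "card \<sigma> = 3" using uni unfolding unimodular_triangle_def by simp
    have "length xs = card ({1..N} - \<sigma>)" unfolding xs_def by simp
    also have "\<dots> = N - 3" using \<sigma>N c3 by (simp add: card_Diff_subset finite_subset)
    finally have len: "length xs = p" unfolding N_def by simp
    have "i3 \<in> set xs" unfolding xs_def using i3N i3n\<sigma> by simp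
    then obtain j0 where j0: "j0 < p" "xs ! j0 = i3" using len by (metis in_set_conv_nth)
    have "det (s_matrix p (p+3) (s \<sigma>) \<sigma>) = 0"
    proof (rule det_zero_col[of _ p j0])
      show "s_matrix p (p + 3) (s \<sigma>) \<sigma> \<in> carrier_mat p p" by (simp add: s_matrix_def)
      show "j0 < p" by fact
      fix i assume "i < p"
      then have "s \<sigma> (i+1) i3 = 0" by (intro z) auto
      then show "s_matrix p (p + 3) (s \<sigma>) \<sigma> $$ (i, j0) = 0"
        using \<open>i < p\<close> j0 unfolding s_matrix_def N_def[symmetric] xs_def[symmetric] by simp
    qed
    thus False using nondeg \<sigma>T by blast
  qed
  have mc: "mirror_coeff p (s {1, 2, 3}) i q = (\<Prod>k\<in>{1..p}. q k ^ t k i)" for i q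
    unfolding mirror_coeff_def t_def by auto
  show ?thesis
  proof (intro exI[of _ e] conjI enz allI impI)
    fix q :: "nat \<Rightarrow> complex"
    assume q: "\<forall>k\<in>{1..p}. q k \<noteq> 0"
    have nz: "(\<Prod>k\<in>{1..p}. q k ^ t k i2) \<noteq> 0" using q by simp
    have "(\<Prod>k\<in>{1..p}. q k ^ t k i1) * (\<Prod>k\<in>{1..p}. q k ^ t k i3)
        = (\<Prod>k\<in>{1..p}. q k ^ (t k i1 + t k i3))" by (simp add: power_add prod.distrib)
    also have "\<dots> = (\<Prod>k\<in>{1..p}. q k ^ (2 * t k i2 + e k))" using key by (intro prod.cong) auto
    also have "\<dots> = (\<Prod>k\<in>{1..p}. q k ^ t k i2) ^ 2 * (\<Prod>k\<in>{1..p}. q k ^ e k)"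
      by (simp add: power_add power_mult prod.distrib prod_power_distrib mult_2 power2_eq_square)
    finally show "mirror_coeff p (s {1, 2, 3}) i1 q * mirror_coeff p (s {1, 2, 3}) i3 q
                / mirror_coeff p (s {1, 2, 3}) i2 q ^ 2 = (\<Prod>k\<in>{1..p}. q k ^ e k)"
      unfolding mc using nz by simp
  qed
qed

end
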